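(* Let $p$ be a prime and $A\subseteq\mathbb{F}_p$ satisfy $A-A\doteq\mathcal{R}_p$. Put $n:=|A|$ and fix any quadratic non-residue $\nu\in\mathcal{N}_p$. Then the $n^2$ sums $a'+\nu a''$ with $a',a''\in A$ are pairwise distinct, and the set $D:=\{a'+\nu a''\colon a',a''\in A\}$ is a $(p,n^2,n(n+1)/2)$-difference set in the additive group of $\mathbb{F}_p$.
   Context: $\mathcal{R}_p$ and $\mathcal{N}_p$ are the sets of quadratic residues and quadratic non-residues in $\mathbb{F}_p^\times$. $A-A\doteq S$ means: every element of $S$ has exactly one representation as $a'-a''$ with $a',a''\in A$, and every difference $a'-a''$ with $a'\ne a''$ in $A$ lies in $S$. For positive integers $v,k,\lambda$, a $(v,k,\lambda)$-difference set in an abelian group of order $v$ is a $k$-element subset $D$ such that every nonzero group element has exactly $\lambda$ representations as $d'-d''$ with $d',d''\in D$. *)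

theory Defs
  imports "HOL-Number_Theory.Number_Theory"
begin

text \<open>We model F_p as the integers {0..<p} with arithmetic mod p.\<close>

definition QR_set :: "int \<Rightarrow> int set" where
  "QR_set p = {x \<in> {1..<p}. QuadRes p x}"

definition QNR_set :: "int \<Rightarrow> int set" where
  "QNR_set p = {x \<in> {1..<p}. \<not> QuadRes p x}"

text \<open>A - A exactly equals S (in Z/pZ): unique representation of each s in S,
  and all nontrivial differences lie in S.\<close>
definition diff_exact :: "int \<Rightarrow> int set \<Rightarrow> int set \<Rightarrow> bool" where
  "diff_exact p A S \<longleftrightarrow>
     (\<forall>s\<in>S. \<exists>!(a1, a2). a1 \<in> A \<and> a2 \<in> A \<and> (a1 - a2) mod p = s) \<and>
     (\<forall>a1\<in>A. \<forall>a2\<in>A. a1 \<noteq> a2 \<longrightarrow> (a1 - a2) mod p \<in> S)"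

definition difference_set :: "int \<Rightarrow> nat \<Rightarrow> nat \<Rightarrow> int set \<Rightarrow> bool" where
  "difference_set v k lam D \<longleftrightarrow> D \<subseteq> {0..<v} \<and> card D = k \<and>
     (\<forall>x\<in>{1..<v}. card {(d1, d2). d1 \<in> D \<and> d2 \<in> D \<and> (d1 - d2) mod v = x} = lam)"

end

theory Submission
  imports Defs
begin

lemma cong_small_eq:
  fixes x y p :: int
  assumes "[x = y] (mod p)" "\<bar>x - y\<bar> < p"
  shows "x = y"
proof (rule ccontr)
  assume "x \<noteq> y"
  have "p dvd (x - y)" using assms(1) by (simp add: cong_iff_dvd_diff)
  then have "\<bar>p\<bar> \<le> \<bar>x - y\<bar>" using \<open>x \<noteq> y\<close> by (intro dvd_imp_le_int) auto
  then show False using assms(2) by linarith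
qed

lemma Legendre_vals: "Legendre a p \<in> {-1, 0, 1}"
  by (auto simp: Legendre_def)

lemma Legendre_mult_nat:
  fixes p :: nat
  assumes "prime p" "2 < p"
  shows "Legendre (a*b) (int p) = Legendre a (int p) * Legendre b (int p)"
proof -
  let ?k = "(p - 1) div 2"
  have "[Legendre (a*b) p = (a*b)^?k] (mod p)"
    using euler_criterion[OF assms] by simp
  also have "(a*b)^?k = a^?k * b^?k" by (simp add: power_mult_distrib)
  also have "[a^?k * b^?k = Legendre a p * Legendre b p] (mod p)"
    using cong_mult[OF cong_sym[OF euler_criterion[OF assms, of a]] cong_sym[OF euler_criterion[OF assms, of b]]]
    by simp
  finally have c: "[Legendre (a*b) p = Legendre a p * Legendre b p] (mod p)" .
  have "\<bar>Legendre (a*b) p - Legendre a p * Legendre b p\<bar> < int p"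
    using Legendre_vals[of "a*b" p] Legendre_vals[of a p] Legendre_vals[of b p] assms(2) by auto
  then show ?thesis using cong_small_eq[OF c] by simp
qed

lemma Legendre_mult:
  fixes p :: int
  assumes "prime p" "2 < p"
  shows "Legendre (a*b) p = Legendre a p * Legendre b p"
proof -
  have "prime (nat p)" "2 < nat p" using assms by auto
  from Legendre_mult_nat[OF this] show ?thesis using assms by simp
qed

lemma Legendre_cong:
  assumes "[a = b] (mod p)"
  shows "Legendre a p = Legendre b p"
proof -
  have 1: "[a = 0] (mod p) \<longleftrightarrow> [b = 0] (mod p)"
    using assms cong_sym cong_trans by metis
  have 2: "QuadRes p a \<longleftrightarrow> QuadRes p b"
    unfolding QuadRes_def using assms cong_sym cong_trans by metis
  show ?thesis unfolding Legendre_def using 1 2 by simp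
qed

lemma Legendre_0_iff: "Legendre a p = 0 \<longleftrightarrow> p dvd a"
  by (auto simp: Legendre_def cong_0_iff)


locale dsetup =
  fixes p \<nu> :: int and A :: "int set"
  assumes p: "prime p" and Asub: "A \<subseteq> {0..<p}"
    and de: "diff_exact p A (QR_set p)" and nu: "\<nu> \<in> QNR_set p"
begin

lemma finA: "finite A"
  using Asub finite_subset by blast

lemma p_gt2: "2 < p"
proof -
  have "p \<ge> 2" using p prime_ge_2_int by blast
  moreover have "p \<noteq> 2"
  proof
    assume "p = 2"
    then have "\<nu> = 1" using nu by (auto simp: QNR_set_def)
    moreover have "QuadRes 2 1" unfolding QuadRes_def by (rule exI[of _ 1]) simp
    ultimately show False using nu \<open>p = 2\<close> by (auto simp: QNR_set_def)
  qed
  ultimately show ?thesis by simp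
qed

lemma p_pos: "0 < p" using p_gt2 by simp

lemma Lmult: "Legendre (a*b) p = Legendre a p * Legendre b p"
  using Legendre_mult[OF p p_gt2] .

lemma mod_id: "x \<in> {0..<p} \<Longrightarrow> x mod p = x"
  by auto

lemma cong_range_eq:
  assumes "x \<in> {0..<p}" "y \<in> {0..<p}" "[x = y] (mod p)"
  shows "x = y"
  using assms by (auto simp: cong_def)

lemma L_range:
  assumes "x \<in> {1..<p}"
  shows "Legendre x p = (if QuadRes p x then 1 else -1)"
proof -
  have "\<not> [x = 0] (mod p)" using assms by (auto simp: cong_def)
  then show ?thesis by (simp add: Legendre_def)
qed

lemma Lnu: "Legendre \<nu> p = -1"
  using nu L_range by (auto simp: QNR_set_def)

lemma diffQR:
  assumes "a \<in> A" "b \<in> A" "a \<noteq> b"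
  shows "Legendre (a - b) p = 1"
proof -
  have m: "(a - b) mod p \<in> QR_set p" using de assms by (auto simp: diff_exact_def)
  then have "Legendre ((a - b) mod p) p = 1" using L_range by (auto simp: QR_set_def)
  moreover have "[(a - b) mod p = a - b] (mod p)" by (simp add: cong_def)
  ultimately show ?thesis using Legendre_cong by metis
qed

lemma key:
  assumes "a1 \<in> A" "b1 \<in> A" "a2 \<in> A" "b2 \<in> A"
    and c: "[(a1 - b1) + \<nu> * (a2 - b2) = 0] (mod p)"
  shows "a1 = b1 \<and> a2 = b2"
proof -
  have a2b2: "a2 = b2"
  proof (rule ccontr)
    assume ne: "a2 \<noteq> b2"
    have L1: "Legendre (\<nu> * (b2 - a2)) p = -1"
      using Lmult Lnu diffQR[OF assms(4,3)] ne by simp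
    have cc: "[a1 - b1 = \<nu> * (b2 - a2)] (mod p)"
      using c unfolding cong_iff_dvd_diff by (simp add: algebra_simps)
    show False
    proof (cases "a1 = b1")
      case True
      then have "Legendre (\<nu> * (b2 - a2)) p = Legendre 0 p"
        using Legendre_cong[OF cc] by simp
      then show False using L1 by (simp add: Legendre_def)
    next
      case False
      then have "Legendre (a1 - b1) p = 1" using diffQR assms by blast
      then show False using L1 Legendre_cong[OF cc] by simp
    qed
  qed
  then have "[a1 = b1] (mod p)" using c by (simp add: cong_iff_dvd_diff)
  then have "a1 = b1" using cong_range_eq assms Asub by blast
  with a2b2 show ?thesis by simp
qed

definition h :: "int \<Rightarrow> nat" where
  "h u = (if Legendre u p = 0 then card A else if Legendre u p = 1 then 1 else 0)"

lemma h_cong: assumes "[u = u'] (mod p)" shows "h u = h u'"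
  unfolding h_def using Legendre_cong[OF assms] by simp

lemma h_mult: "Legendre q p = 1 \<Longrightarrow> h (q * u) = h u"
  unfolding h_def using Lmult by simp

lemma h_sq: "h (\<nu> * \<nu> * u) = h u"
  using h_mult[of "\<nu> * \<nu>"] Lmult Lnu by simp

definition r :: "int \<Rightarrow> nat" where
  "r u = card {(a, b). a \<in> A \<and> b \<in> A \<and> [a - b = u] (mod p)}"

lemma r_eq: "r u = h u"
proof -
  consider "Legendre u p = 0" | "Legendre u p = 1" | "Legendre u p = -1"
    using Legendre_vals[of u p] by auto
  then show ?thesis
  proof cases
    case 1
    then have u0: "p dvd u" using Legendre_0_iff by blast
    have "{(a, b). a \<in> A \<and> b \<in> A \<and> [a - b = u] (mod p)} = (\<lambda>a. (a, a)) ` A"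
    proof -
      have E: "a = b" if "a \<in> A" "b \<in> A" "[a - b = u] (mod p)" for a b
      proof -
        have "[a = b] (mod p)" using u0 that(3) unfolding cong_iff_dvd_diff
          by (metis diff_diff_eq2 diff_add_cancel dvd_add_left_iff add.commute)
        then show "a = b" using cong_range_eq that(1,2) Asub by blast
      qed
      have "[a - a = u] (mod p)" for a using u0 by (simp add: cong_iff_dvd_diff)
      then show ?thesis using E by auto
    qed
    then have "r u = card A" unfolding r_def by (simp add: card_image inj_on_def)
    then show ?thesis using 1 by (simp add: h_def)
  next
    case 2
    then have nz: "\<not> [u = 0] (mod p)" and qr: "QuadRes p u" by (auto simp: Legendre_def split: if_splits)
    have um: "u mod p \<in> QR_set p"
    proof -
      have "u mod p \<noteq> 0" using nz by (simp add: cong_def)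
      moreover have "0 \<le> u mod p" "u mod p < p" using p_pos by auto
      moreover have "QuadRes p (u mod p)" using qr unfolding QuadRes_def
        by (metis cong_def mod_mod_trivial)
      ultimately show ?thesis by (auto simp: QR_set_def)
    qed
    then have ex: "\<exists>!(a1, a2). a1 \<in> A \<and> a2 \<in> A \<and> (a1 - a2) mod p = u mod p"
      using de by (auto simp: diff_exact_def)
    have eqs: "{(a, b). a \<in> A \<and> b \<in> A \<and> [a - b = u] (mod p)}
       = {x. case x of (a1, a2) \<Rightarrow> a1 \<in> A \<and> a2 \<in> A \<and> (a1 - a2) mod p = u mod p}"
      by (auto simp: cong_def)
    define Q where "Q = (\<lambda>x. case x of (a1, a2) \<Rightarrow> a1 \<in> A \<and> a2 \<in> A \<and> (a1 - a2) mod p = u mod p)"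
    have ex': "\<exists>!x. Q x" using ex unfolding Q_def .
    then obtain z where "Q z" "\<And>y. Q y \<Longrightarrow> y = z" unfolding Ex1_def by blast
    then have "{x. case x of (a1, a2) \<Rightarrow> a1 \<in> A \<and> a2 \<in> A \<and> (a1 - a2) mod p = u mod p} = {z}"
      unfolding Q_def[symmetric] by blast
    then have "r u = 1" unfolding r_def eqs by simp
    then show ?thesis using 2 by (simp add: h_def)
  next
    case 3
    have "{(a, b). a \<in> A \<and> b \<in> A \<and> [a - b = u] (mod p)} = {}"
    proof (auto)
      fix a b assume ab: "a \<in> A" "b \<in> A" "[a - b = u] (mod p)"
      show False
      proof (cases "a = b")
        case True
        then have "Legendre 0 p = Legendre u p" using Legendre_cong[OF ab(3)] by simp
        then show False using 3 by (simp add: Legendre_def)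
      next
        case False
        then have "Legendre (a - b) p = 1" using diffQR ab by blast
        moreover have "Legendre (a - b) p = Legendre u p" using Legendre_cong ab(3) by blast
        ultimately show False using 3 by simp
      qed
    qed
    then have "r u = 0" unfolding r_def by (simp only: card.empty)
    then show ?thesis using 3 by (simp add: h_def)
  qed
qed


lemma sum_reindex_mod:
  fixes f :: "int \<Rightarrow> nat"
  assumes fc: "\<And>u u'. [u = u'] (mod p) \<Longrightarrow> f u = f u'" and c: "\<not> p dvd c"
  shows "(\<Sum>v\<in>{0..<p}. f (c * v + d)) = (\<Sum>v\<in>{0..<p}. f v)"
proof -
  define g where "g v = (c * v + d) mod p" for v
  have sub: "g ` {0..<p} \<subseteq> {0..<p}" using p_pos by (auto simp: g_def)
  have inj: "inj_on g {0..<p}"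
  proof (rule inj_onI)
    fix v w assume v: "v \<in> {0..<p}" and w: "w \<in> {0..<p}" and e: "g v = g w"
    then have "p dvd (c * v + d) - (c * w + d)"
      unfolding g_def by (simp add: mod_eq_dvd_iff)
    then have "p dvd c * (v - w)" by (simp add: algebra_simps)
    then have "p dvd (v - w)" using c p by (simp add: prime_dvd_mult_iff)
    then show "v = w" using cong_range_eq[OF v w] by (simp add: cong_iff_dvd_diff)
  qed
  have bij: "bij_betw g {0..<p} {0..<p}"
    unfolding bij_betw_def using inj endo_inj_surj[OF _ sub inj] by simp
  have "(\<Sum>v\<in>{0..<p}. f (g v)) = (\<Sum>v\<in>{0..<p}. f v)"
    by (rule sum.reindex_bij_betw[OF bij])
  moreover have "f (g v) = f (c * v + d)" for v
    by (rule fc) (simp add: g_def cong_def)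
  ultimately show ?thesis by simp
qed

definition SS :: "int \<Rightarrow> nat" where
  "SS x = (\<Sum>v\<in>{0..<p}. h (x - \<nu> * v) * h v)"

lemma S_cong:
  assumes "[x = x'] (mod p)"
  shows "SS x = SS x'"
proof -
  have "h (x - \<nu> * v) = h (x' - \<nu> * v)" for v
    by (rule h_cong) (use assms in \<open>simp add: cong_iff_dvd_diff\<close>)
  then show ?thesis unfolding SS_def by simp
qed

lemma nu_ndvd: "\<not> p dvd \<nu>"
  using Lnu Legendre_0_iff[of \<nu> p] by simp

lemma S_nu: "SS (\<nu> * x) = SS x"
proof -
  define F where "F w = h (\<nu> * x - \<nu> * w) * h w" for w
  have fc: "F u = F u'" if "[u = u'] (mod p)" for u u'
  proof -
    have d: "p dvd \<nu> * (u' - u)" using that unfolding cong_iff_dvd_diff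
      by (metis dvd_mult minus_diff_eq dvd_minus_iff)
    have "h (\<nu> * x - \<nu> * u) = h (\<nu> * x - \<nu> * u')"
      by (rule h_cong) (use d in \<open>simp add: cong_iff_dvd_diff algebra_simps\<close>)
    moreover have "h u = h u'" using h_cong[OF that] .
    ultimately show ?thesis by (simp add: F_def)
  qed
  have "\<not> p dvd (- \<nu>)" using nu_ndvd by simp
  from sum_reindex_mod[OF fc this, where d = x]
  have "(\<Sum>v\<in>{0..<p}. F (- \<nu> * v + x)) = SS (\<nu> * x)" unfolding SS_def F_def by simp
  moreover have "F (- \<nu> * v + x) = h (x - \<nu> * v) * h v" for v
  proof -
    have "\<nu> * x - \<nu> * (- \<nu> * v + x) = \<nu> * \<nu> * v" by (simp add: algebra_simps)
    then show ?thesis unfolding F_def using h_sq[of v] by (simp add: algebra_simps)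
  qed
  ultimately show ?thesis unfolding SS_def by simp
qed

lemma S_q:
  assumes q: "Legendre q p = 1"
  shows "SS (q * x) = SS x"
proof -
  define F where "F w = h (q * x - \<nu> * w) * h w" for w
  have fc: "F u = F u'" if "[u = u'] (mod p)" for u u'
  proof -
    have d: "p dvd \<nu> * (u' - u)" using that unfolding cong_iff_dvd_diff
      by (metis dvd_mult minus_diff_eq dvd_minus_iff)
    have "h (q * x - \<nu> * u) = h (q * x - \<nu> * u')"
      by (rule h_cong) (use d in \<open>simp add: cong_iff_dvd_diff algebra_simps\<close>)
    moreover have "h u = h u'" using h_cong[OF that] .
    ultimately show ?thesis by (simp add: F_def)
  qed
  have "\<not> p dvd q" using q Legendre_0_iff[of q p] by simp
  from sum_reindex_mod[OF fc this, where d = 0]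
  have "(\<Sum>v\<in>{0..<p}. F (q * v)) = SS (q * x)" unfolding SS_def F_def by simp
  moreover have "F (q * v) = h (x - \<nu> * v) * h v" for v
  proof -
    have "q * x - \<nu> * (q * v) = q * (x - \<nu> * v)" by (simp add: algebra_simps)
    then show ?thesis unfolding F_def using h_mult[OF q] by simp
  qed
  ultimately show ?thesis unfolding SS_def by simp
qed

lemma S_const:
  assumes "\<not> p dvd x"
  shows "SS x = SS 1"
proof -
  have "Legendre x p \<noteq> 0" using assms Legendre_0_iff by blast
  then consider "Legendre x p = 1" | "Legendre x p = -1" using Legendre_vals[of x p] by auto
  then show ?thesis
  proof cases
    case 1
    then show ?thesis using S_q[OF 1, of 1] by simp
  next
    case 2
    then have L: "Legendre (\<nu> * x) p = 1" using Lmult Lnu by simp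
    have "SS x = SS (\<nu> * x)" using S_nu by simp
    also have "\<dots> = SS 1" using S_q[OF L, of 1] by simp
    finally show ?thesis .
  qed
qed


definition QS :: "int \<Rightarrow> ((int \<times> int) \<times> (int \<times> int)) set" where
  "QS x = {((a1, b1), (a2, b2)). a1 \<in> A \<and> b1 \<in> A \<and> a2 \<in> A \<and> b2 \<in> A \<and>
            [(a1 - b1) + \<nu> * (a2 - b2) = x] (mod p)}"

lemma QS_sub: "QS x \<subseteq> (A \<times> A) \<times> (A \<times> A)"
  by (auto simp: QS_def)

lemma finQS: "finite (QS x)"
  by (rule finite_subset[OF QS_sub]) (simp add: finA)

lemma aux_cong:
  assumes "[a2 - b2 = v] (mod p)"
  shows "[(a1 - b1) + \<nu> * (a2 - b2) = x] (mod p) \<longleftrightarrow> [a1 - b1 = x - \<nu> * v] (mod p)"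
proof -
  have t: "p dvd \<nu> * ((a2 - b2) - v)" using assms by (simp add: cong_iff_dvd_diff)
  have eq: "(a1 - b1) + \<nu> * (a2 - b2) - x = (a1 - b1 - (x - \<nu> * v)) + \<nu> * ((a2 - b2) - v)"
    by (simp add: algebra_simps)
  have "p dvd ((a1 - b1) + \<nu> * (a2 - b2) - x) \<longleftrightarrow> p dvd (a1 - b1 - (x - \<nu> * v))"
    unfolding eq by (rule dvd_add_left_iff[OF t])
  then show ?thesis unfolding cong_iff_dvd_diff .
qed

lemma Q_eq: "card (QS x) = SS x"
proof -
  define g where "g z = (case z of ((a1, b1), (a2, b2)) \<Rightarrow> (a2 - b2) mod p)" for z :: "(int \<times> int) \<times> (int \<times> int)"
  have gi: "g ` QS x \<subseteq> {0..<p}" using p_pos by (auto simp: g_def split: prod.splits)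
  have "card (QS x) = (\<Sum>v\<in>{0..<p}. card {z \<in> QS x. g z = v})"
    using sum.group[OF finQS _ gi, of "\<lambda>_. (1::nat)"] by simp
  also have "\<dots> = (\<Sum>v\<in>{0..<p}. h (x - \<nu> * v) * h v)"
  proof (rule sum.cong[OF refl])
    fix v assume v: "v \<in> {0..<p}"
    define P1 where "P1 = {(a1, b1). a1 \<in> A \<and> b1 \<in> A \<and> [a1 - b1 = x - \<nu> * v] (mod p)}"
    define P2 where "P2 = {(a2, b2). a2 \<in> A \<and> b2 \<in> A \<and> [a2 - b2 = v] (mod p)}"
    have vm: "v mod p = v" using v by auto
    have "{z \<in> QS x. g z = v} = P1 \<times> P2"
    proof (rule Set.set_eqI)
      fix z :: "(int \<times> int) \<times> (int \<times> int)"
      obtain a1 b1 a2 b2 where z: "z = ((a1, b1), (a2, b2))" by (metis prod.exhaust)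
      have gz: "g z = v \<longleftrightarrow> [a2 - b2 = v] (mod p)" using vm by (simp add: z g_def cong_def)
      show "z \<in> {z \<in> QS x. g z = v} \<longleftrightarrow> z \<in> P1 \<times> P2"
        using aux_cong[of a2 b2 v a1 b1 x] gz by (auto simp: z QS_def P1_def P2_def)
    qed
    then have "card {z \<in> QS x. g z = v} = card P1 * card P2" by (simp add: card_cartesian_product)
    also have "card P1 = h (x - \<nu> * v)" using r_eq unfolding r_def P1_def by simp
    also have "card P2 = h v" using r_eq unfolding r_def P2_def by simp
    finally show "card {z \<in> QS x. g z = v} = h (x - \<nu> * v) * h v" .
  qed
  finally show ?thesis unfolding SS_def .
qed

lemma Q_total: "(\<Sum>x\<in>{0..<p}. card (QS x)) = card A ^ 4"
proof -
  define T where "T = (A \<times> A) \<times> (A \<times> A)"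
  define e where "e z = (case z of ((a1, b1), (a2, b2)) \<Rightarrow> ((a1 - b1) + \<nu> * (a2 - b2)) mod p)" for z :: "(int \<times> int) \<times> (int \<times> int)"
  have fT: "finite T" using finA by (simp add: T_def)
  have ei: "e ` T \<subseteq> {0..<p}" using p_pos by (auto simp: e_def split: prod.splits)
  have "card T = (\<Sum>x\<in>{0..<p}. card {z \<in> T. e z = x})"
    using sum.group[OF fT _ ei, of "\<lambda>_. (1::nat)"] by simp
  also have "\<dots> = (\<Sum>x\<in>{0..<p}. card (QS x))"
  proof (rule sum.cong[OF refl])
    fix x assume x: "x \<in> {0..<p}"
    have xm: "x mod p = x" using x by auto
    have "{z \<in> T. e z = x} = QS x"
    proof (rule Set.set_eqI)
      fix z :: "(int \<times> int) \<times> (int \<times> int)"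
      obtain a1 b1 a2 b2 where z: "z = ((a1, b1), (a2, b2))" by (metis prod.exhaust)
      show "z \<in> {z \<in> T. e z = x} \<longleftrightarrow> z \<in> QS x"
        using xm by (auto simp: z QS_def T_def e_def cong_def)
    qed
    then show "card {z \<in> T. e z = x} = card (QS x)" by simp
  qed
  finally show ?thesis by (simp add: T_def card_cartesian_product power4_eq_xxxx)
qed

lemma Q0: "card (QS 0) = card A ^ 2"
proof -
  have "QS 0 = (\<lambda>(a, b). ((a, a), (b, b))) ` (A \<times> A)"
  proof (rule Set.set_eqI)
    fix z :: "(int \<times> int) \<times> (int \<times> int)"
    obtain a1 b1 a2 b2 where z: "z = ((a1, b1), (a2, b2))" by (metis prod.exhaust)
    show "z \<in> QS 0 \<longleftrightarrow> z \<in> (\<lambda>(a, b). ((a, a), (b, b))) ` (A \<times> A)"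
    proof
      assume "z \<in> QS 0"
      then have m: "a1 \<in> A" "b1 \<in> A" "a2 \<in> A" "b2 \<in> A" "[(a1 - b1) + \<nu> * (a2 - b2) = 0] (mod p)"
        by (auto simp: z QS_def)
      from key[OF m] m show "z \<in> (\<lambda>(a, b). ((a, a), (b, b))) ` (A \<times> A)"
        by (auto simp: z image_iff)
    next
      assume "z \<in> (\<lambda>(a, b). ((a, a), (b, b))) ` (A \<times> A)"
      then show "z \<in> QS 0" by (auto simp: z QS_def)
    qed
  qed
  moreover have "inj_on (\<lambda>(a, b). ((a, a), (b, b))) (A \<times> A)" by (auto simp: inj_on_def)
  ultimately show ?thesis by (simp add: card_image card_cartesian_product power2_eq_square)
qed


lemma de1: "s \<in> QR_set p \<Longrightarrow> \<exists>!(a1, a2). a1 \<in> A \<and> a2 \<in> A \<and> (a1 - a2) mod p = s"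
  using de unfolding diff_exact_def by blast

lemma de2: "a1 \<in> A \<Longrightarrow> a2 \<in> A \<Longrightarrow> a1 \<noteq> a2 \<Longrightarrow> (a1 - a2) mod p \<in> QR_set p"
  using de unfolding diff_exact_def by blast

lemma QR_card: "card (QR_set p) = card A * (card A - 1)"
proof -
  define Off where "Off = {(a, b). a \<in> A \<and> b \<in> A \<and> a \<noteq> b}"
  define f where "f = (\<lambda>(a, b). (a - b) mod p)"
  have inj: "inj_on f Off"
  proof (rule inj_onI)
    fix x y assume x: "x \<in> Off" and y: "y \<in> Off" and e: "f x = f y"
    obtain a b where xab: "x = (a, b)" by (metis prod.exhaust)
    obtain c d where ycd: "y = (c, d)" by (metis prod.exhaust)
    have ab: "a \<in> A" "b \<in> A" "a \<noteq> b" using x by (auto simp: xab Off_def)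
    have cd: "c \<in> A" "d \<in> A" using y by (auto simp: ycd Off_def)
    define Q where "Q = (\<lambda>z. case z of (a1, a2) \<Rightarrow> a1 \<in> A \<and> a2 \<in> A \<and> (a1 - a2) mod p = (a - b) mod p)"
    have ex: "\<exists>!z. Q z" unfolding Q_def by (rule de1[OF de2[OF ab]])
    have "(c - d) mod p = (a - b) mod p" using e by (simp add: f_def xab ycd)
    then have "Q (a, b)" "Q (c, d)" using ab cd by (auto simp: Q_def)
    with ex have "(a, b) = (c, d)" by blast
    then show "x = y" by (simp add: xab ycd)
  qed
  have img: "f ` Off = QR_set p"
  proof (rule Set.set_eqI)
    fix s
    show "s \<in> f ` Off \<longleftrightarrow> s \<in> QR_set p"
    proof
      assume "s \<in> f ` Off"
      then obtain a b where "a \<in> A" "b \<in> A" "a \<noteq> b" "s = (a - b) mod p"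
        by (auto simp: f_def Off_def)
      then show "s \<in> QR_set p" using de2 by blast
    next
      assume sQ: "s \<in> QR_set p"
      obtain a1 a2 where a: "a1 \<in> A" "a2 \<in> A" "(a1 - a2) mod p = s"
        using de1[OF sQ] by blast
      have "s \<noteq> 0" using sQ by (auto simp: QR_set_def)
      then have "a1 \<noteq> a2" using a by auto
      then have "(a1, a2) \<in> Off" using a by (simp add: Off_def)
      moreover have "f (a1, a2) = s" using a by (simp add: f_def)
      ultimately show "s \<in> f ` Off" by (metis imageI)
    qed
  qed
  have "Off = A \<times> A - (\<lambda>a. (a, a)) ` A" by (auto simp: Off_def)
  moreover have "card ((\<lambda>a. (a, a)) ` A) = card A" by (simp add: card_image inj_on_def)
  moreover have "(\<lambda>a. (a, a)) ` A \<subseteq> A \<times> A" by auto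
  ultimately have "card Off = card A * card A - card A"
    using finA by (simp add: card_Diff_subset card_cartesian_product)
  then have "card Off = card A * (card A - 1)" by (simp add: diff_mult_distrib2)
  moreover have "card (QR_set p) = card Off" using card_image[OF inj] img by simp
  ultimately show ?thesis by simp
qed

lemma mul_nu:
  assumes x: "x \<in> {1..<p}"
  shows "(\<nu> * x) mod p \<in> {1..<p} \<and> Legendre ((\<nu> * x) mod p) p = - Legendre x p"
proof -
  have Lx: "Legendre x p \<noteq> 0" using L_range[OF x] by simp
  have "Legendre ((\<nu> * x) mod p) p = Legendre (\<nu> * x) p"
    by (rule Legendre_cong) (simp add: cong_def)
  also have "\<dots> = - Legendre x p" using Lmult Lnu by simp
  finally have L: "Legendre ((\<nu> * x) mod p) p = - Legendre x p" .
  then have "\<not> p dvd ((\<nu> * x) mod p)" using Lx Legendre_0_iff by (metis neg_equal_0_iff_equal)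
  then have "(\<nu> * x) mod p \<noteq> 0" by auto
  moreover have "0 \<le> (\<nu> * x) mod p" "(\<nu> * x) mod p < p" using p_pos by auto
  ultimately show ?thesis using L by auto
qed

lemma mul_nu_inj: "inj_on (\<lambda>x. (\<nu> * x) mod p) {1..<p}"
proof (rule inj_onI)
  fix v w assume v: "v \<in> {1..<p}" and w: "w \<in> {1..<p}" and e: "(\<nu> * v) mod p = (\<nu> * w) mod p"
  then have "p dvd \<nu> * v - \<nu> * w" by (simp add: mod_eq_dvd_iff)
  then have "p dvd \<nu> * (v - w)" by (simp add: algebra_simps)
  then have "p dvd (v - w)" using nu_ndvd p by (simp add: prime_dvd_mult_iff)
  then show "v = w" using cong_range_eq[of v w] v w by (simp add: cong_iff_dvd_diff)
qed

lemma QNR_card: "card (QNR_set p) = card (QR_set p)"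
proof -
  have finR: "finite (QR_set p)" "finite (QNR_set p)"
    by (rule finite_subset[of _ "{1..<p}"], auto simp: QR_set_def QNR_set_def)+
  have subR: "QR_set p \<subseteq> {1..<p}" "QNR_set p \<subseteq> {1..<p}" by (auto simp: QR_set_def QNR_set_def)
  have m1: "(\<lambda>x. (\<nu> * x) mod p) ` QR_set p \<subseteq> QNR_set p"
  proof
    fix y assume "y \<in> (\<lambda>x. (\<nu> * x) mod p) ` QR_set p"
    then obtain x where x: "x \<in> QR_set p" "y = (\<nu> * x) mod p" by auto
    then have x1: "x \<in> {1..<p}" "QuadRes p x" by (auto simp: QR_set_def)
    then have "Legendre x p = 1" using L_range by simp
    then have "y \<in> {1..<p}" "Legendre y p = -1" using mul_nu[OF x1(1)] x(2) by auto
    then show "y \<in> QNR_set p" using L_range[of y] by (auto simp: QNR_set_def split: if_splits)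
  qed
  have m2: "(\<lambda>x. (\<nu> * x) mod p) ` QNR_set p \<subseteq> QR_set p"
  proof
    fix y assume "y \<in> (\<lambda>x. (\<nu> * x) mod p) ` QNR_set p"
    then obtain x where x: "x \<in> QNR_set p" "y = (\<nu> * x) mod p" by auto
    then have x1: "x \<in> {1..<p}" "\<not> QuadRes p x" by (auto simp: QNR_set_def)
    then have "Legendre x p = -1" using L_range by simp
    then have "y \<in> {1..<p}" "Legendre y p = 1" using mul_nu[OF x1(1)] x(2) by auto
    then show "y \<in> QR_set p" using L_range[of y] by (auto simp: QR_set_def split: if_splits)
  qed
  have "card (QR_set p) \<le> card (QNR_set p)"
    using card_inj_on_le[OF inj_on_subset[OF mul_nu_inj subR(1)] m1 finR(2)] .
  moreover have "card (QNR_set p) \<le> card (QR_set p)"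
    using card_inj_on_le[OF inj_on_subset[OF mul_nu_inj subR(2)] m2 finR(1)] .
  ultimately show ?thesis by simp
qed

lemma p_card: "2 * card (QR_set p) = nat (p - 1)"
proof -
  have "{1..<p} = QR_set p \<union> QNR_set p" by (auto simp: QR_set_def QNR_set_def)
  moreover have "QR_set p \<inter> QNR_set p = {}" by (auto simp: QR_set_def QNR_set_def)
  moreover have "finite (QR_set p)" "finite (QNR_set p)"
    by (rule finite_subset[of _ "{1..<p}"], auto simp: QR_set_def QNR_set_def)+
  ultimately have "card {1..<p} = card (QR_set p) + card (QNR_set p)"
    by (simp add: card_Un_disjoint)
  then show ?thesis using QNR_card by simp
qed


definition phi :: "int \<times> int \<Rightarrow> int" where
  "phi = (\<lambda>(a1, a2). (a1 + \<nu> * a2) mod p)"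

lemma phi_inj: "inj_on phi (A \<times> A)"
proof (rule inj_onI)
  fix x y assume x: "x \<in> A \<times> A" and y: "y \<in> A \<times> A" and e: "phi x = phi y"
  obtain a1 a2 where xa: "x = (a1, a2)" by (metis prod.exhaust)
  obtain b1 b2 where yb: "y = (b1, b2)" by (metis prod.exhaust)
  have "p dvd (a1 + \<nu> * a2) - (b1 + \<nu> * b2)" using e by (simp add: phi_def xa yb mod_eq_dvd_iff)
  then have "[(a1 - b1) + \<nu> * (a2 - b2) = 0] (mod p)" by (simp add: cong_0_iff algebra_simps)
  then have "a1 = b1 \<and> a2 = b2" using key x y xa yb by blast
  then show "x = y" by (simp add: xa yb)
qed

lemma S1_val: "SS 1 = card A * (card A + 1) div 2"
proof -
  define n where "n = card A"
  define s where "s = SS 1"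
  have Qx: "card (QS x) = s" if "x \<in> {1..<p}" for x
  proof -
    have "\<not> p dvd x" using that by (auto dest: zdvd_imp_le)
    then show ?thesis using Q_eq S_const s_def by simp
  qed
  have "{0..<p} = insert 0 {1..<p}" using p_pos by auto
  then have "(\<Sum>x\<in>{0..<p}. card (QS x)) = card (QS 0) + (\<Sum>x\<in>{1..<p}. card (QS x))"
    by simp
  also have "(\<Sum>x\<in>{1..<p}. card (QS x)) = (\<Sum>x\<in>{1..<p}. s)" using Qx by simp
  also have "\<dots> = nat (p - 1) * s" by simp
  finally have E: "n ^ 4 = n ^ 2 + nat (p - 1) * s" using Q_total Q0 n_def by simp
  have P: "2 * (n * (n - 1)) = nat (p - 1)" using p_card QR_card n_def by simp
  have "nat (p - 1) \<ge> 2" using p_gt2 by simp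
  then have n2: "n \<ge> 2" using P by (cases n; cases "n - 1"; simp)
  define N where "N = int n"
  have E': "N ^ 4 = N ^ 2 + 2 * (N * (N - 1)) * int s"
  proof -
    have "int (n ^ 4) = int (n ^ 2 + 2 * (n * (n - 1)) * s)" using E P by simp
    then show ?thesis using n2 by (simp add: N_def of_nat_diff)
  qed
  have "N * (N - 1) * (N * (N + 1) - 2 * int s) = 0"
    using E' by (simp add: algebra_simps power4_eq_xxxx power2_eq_square)
  moreover have "N * (N - 1) \<noteq> 0" using n2 by (simp add: N_def)
  ultimately have "N * (N + 1) = 2 * int s" by simp
  then have "n * (n + 1) = 2 * s" unfolding N_def by (metis of_nat_eq_iff of_nat_mult of_nat_add of_nat_1 of_nat_numeral)
  then show ?thesis unfolding s_def n_def by simp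
qed

lemma main:
  "inj_on phi (A \<times> A) \<and>
   difference_set p ((card A)\<^sup>2) (card A * (card A + 1) div 2) (phi ` (A \<times> A))"
proof -
  define D where "D = phi ` (A \<times> A)"
  have Dsub: "D \<subseteq> {0..<p}" using p_pos by (auto simp: D_def phi_def)
  have cD: "card D = (card A)\<^sup>2"
    using card_image[OF phi_inj] by (simp add: D_def card_cartesian_product power2_eq_square)
  have cnt: "card {(d1, d2). d1 \<in> D \<and> d2 \<in> D \<and> (d1 - d2) mod p = x} = card A * (card A + 1) div 2"
    if x: "x \<in> {1..<p}" for x
  proof -
    define psi where "psi = (\<lambda>z :: (int \<times> int) \<times> (int \<times> int). case z of ((a1, b1), (a2, b2)) \<Rightarrow> (phi (a1, a2), phi (b1, b2)))"
    have xm: "x mod p = x" using x by auto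
    have psi_inj: "inj_on psi (QS x)"
    proof (rule inj_onI)
      fix z w assume z: "z \<in> QS x" and w: "w \<in> QS x" and e: "psi z = psi w"
      obtain a1 b1 a2 b2 where zz: "z = ((a1, b1), (a2, b2))" by (metis prod.exhaust)
      obtain c1 d1 c2 d2 where ww: "w = ((c1, d1), (c2, d2))" by (metis prod.exhaust)
      have m: "a1 \<in> A" "b1 \<in> A" "a2 \<in> A" "b2 \<in> A" "c1 \<in> A" "d1 \<in> A" "c2 \<in> A" "d2 \<in> A"
        using z w by (auto simp: zz ww QS_def)
      have "phi (a1, a2) = phi (c1, c2)" "phi (b1, b2) = phi (d1, d2)" using e by (auto simp: psi_def zz ww)
      then have "(a1, a2) = (c1, c2)" "(b1, b2) = (d1, d2)"
        using phi_inj m by (auto dest: inj_onD)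
      then show "z = w" by (simp add: zz ww)
    qed
    have img: "psi ` QS x = {(d1, d2). d1 \<in> D \<and> d2 \<in> D \<and> (d1 - d2) mod p = x}"
    proof (rule Set.set_eqI)
      fix y
      have dif: "(phi (a1, a2) - phi (b1, b2)) mod p = x \<longleftrightarrow> [(a1 - b1) + \<nu> * (a2 - b2) = x] (mod p)"
        for a1 a2 b1 b2
      proof -
        have "(phi (a1, a2) - phi (b1, b2)) mod p = ((a1 + \<nu> * a2) - (b1 + \<nu> * b2)) mod p"
          by (simp add: phi_def mod_diff_eq)
        also have "(a1 + \<nu> * a2) - (b1 + \<nu> * b2) = (a1 - b1) + \<nu> * (a2 - b2)" by (simp add: algebra_simps)
        finally show ?thesis using xm by (simp add: cong_def)
      qed
      show "y \<in> psi ` QS x \<longleftrightarrow> y \<in> {(d1, d2). d1 \<in> D \<and> d2 \<in> D \<and> (d1 - d2) mod p = x}"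
      proof
        assume "y \<in> psi ` QS x"
        then obtain a1 b1 a2 b2 where "((a1, b1), (a2, b2)) \<in> QS x" "y = (phi (a1, a2), phi (b1, b2))"
          by (auto simp: psi_def)
        then show "y \<in> {(d1, d2). d1 \<in> D \<and> d2 \<in> D \<and> (d1 - d2) mod p = x}"
          using dif by (auto simp: QS_def D_def)
      next
        assume "y \<in> {(d1, d2). d1 \<in> D \<and> d2 \<in> D \<and> (d1 - d2) mod p = x}"
        then obtain a1 a2 b1 b2 where ab: "a1 \<in> A" "a2 \<in> A" "b1 \<in> A" "b2 \<in> A"
          "y = (phi (a1, a2), phi (b1, b2))" "(phi (a1, a2) - phi (b1, b2)) mod p = x"
          by (auto simp: D_def)
        then have "((a1, b1), (a2, b2)) \<in> QS x" using dif by (simp add: QS_def)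
        moreover have "psi ((a1, b1), (a2, b2)) = y" using ab by (simp add: psi_def)
        ultimately show "y \<in> psi ` QS x" by (metis imageI)
      qed
    qed
    have "card {(d1, d2). d1 \<in> D \<and> d2 \<in> D \<and> (d1 - d2) mod p = x} = card (QS x)"
      using card_image[OF psi_inj] img by simp
    also have "\<dots> = SS x" by (rule Q_eq)
    also have "\<dots> = SS 1" using x by (intro S_const) (auto dest: zdvd_imp_le)
    finally show ?thesis using S1_val by simp
  qed
  show ?thesis using phi_inj Dsub cD cnt unfolding difference_set_def D_def by blast
qed

end

theorem claim1:
  fixes p \<nu> :: int and A :: "int set"
  assumes "prime p"
    and "A \<subseteq> {0..<p}"
    and "diff_exact p A (QR_set p)"
    and "\<nu> \<in> QNR_set p"
  shows "inj_on (\<lambda>(a1, a2). (a1 + \<nu> * a2) mod p) (A \<times> A)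
    \<and> difference_set p ((card A)\<^sup>2) (card A * (card A + 1) div 2)
        ((\<lambda>(a1, a2). (a1 + \<nu> * a2) mod p) ` (A \<times> A))"
proof -
  interpret dsetup p \<nu> A using assms by unfold_locales
  show ?thesis using main unfolding phi_def .
qed

end
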